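(* Let $H=H(V,w)$ be a weighted graph and let $\mathcal D=\{H^j(V_j,w_j):1\le j\le m\}$ be a decomposition of $H$. For each vertex $u\in V$ let $\lambda(\mathcal D_u)=\sum_{j:\,u\in V_j}\lambda(H^j)$ (an empty sum being $0$). Then $$\lambda(H)\ \ge\ \min_{u\in V}\lambda(\mathcal D_u).$$ Writing $\lambda(\mathcal D)=\min_u\lambda(\mathcal D_u)$, equality holds if and only if there is a nonzero real vector $x=(x_u)_{u\in V}$ such that (1) $x_u=0$ for every $u$ with $\lambda(\mathcal D_u)>\lambda(\mathcal D)$, and (2) for every $1\le j\le m$, the restriction $x_j$ of $x$ to $V_j$ is either the zero vector or an eigenvector of the adjacency matrix $A(w_j)$ of $H^j$ for the eigenvalue $\lambda(H^j)$.
   Context: A weighted graph $H(V,w)$ consists of a finite vertex set $V$ and a function $w$ assigning a real number (possibly negative or zero) $w(uv)$ to every unordered pair $\{u,v\}$ of vertices, including pairs with $u=v$ (loops). Its adjacency matrix $A(w)$ is the real symmetric matrix indexed by $V$ with $(u,v)$-entry $w(uv)$ (so diagonal entries are $w(uu)$), and $\lambda(H)$ denotes the smallest eigenvalue of $A(w)$. A family $\{H^j(V_j,w_j):1\le j\le m\}$ of weighted graphs is a decomposition of $H(V,w)$ if $V_j\subseteq V$ for all $j$ and $w(uv)=\sum_{j=1}^m w_j(uv)$ for all unordered pairs $u,v\in V$, where $w_j(uv)$ is taken to be $0$ if $u\notin V_j$ or $v\notin V_j$. *)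

theory Defs
  imports Complex_Main
begin

text \<open>A weighted graph H(V,w): finite vertex set V :: 'a set and weight function
  w :: 'a => 'a => real, symmetric (w u v = w v u) since weights live on unordered pairs.
  Vectors indexed by V are functions 'a => real (values outside V are ignored).\<close>

definition adj_apply :: "'a set \<Rightarrow> ('a \<Rightarrow> 'a \<Rightarrow> real) \<Rightarrow> ('a \<Rightarrow> real) \<Rightarrow> 'a \<Rightarrow> real" where
  "adj_apply V w x u = (\<Sum>v\<in>V. w u v * x v)"

definition is_eigenvector :: "'a set \<Rightarrow> ('a \<Rightarrow> 'a \<Rightarrow> real) \<Rightarrow> real \<Rightarrow> ('a \<Rightarrow> real) \<Rightarrow> bool" where
  "is_eigenvector V w lam x \<longleftrightarrow>
     (\<exists>u\<in>V. x u \<noteq> 0) \<and> (\<forall>u\<in>V. adj_apply V w x u = lam * x u)"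

definition eigenvalues :: "'a set \<Rightarrow> ('a \<Rightarrow> 'a \<Rightarrow> real) \<Rightarrow> real set" where
  "eigenvalues V w = {lam. \<exists>x. is_eigenvector V w lam x}"

definition smallest_eig :: "'a set \<Rightarrow> ('a \<Rightarrow> 'a \<Rightarrow> real) \<Rightarrow> real" where
  "smallest_eig V w = Min (eigenvalues V w)"

definition is_decomposition ::
  "'a set \<Rightarrow> ('a \<Rightarrow> 'a \<Rightarrow> real) \<Rightarrow> nat \<Rightarrow> (nat \<Rightarrow> 'a set) \<Rightarrow> (nat \<Rightarrow> 'a \<Rightarrow> 'a \<Rightarrow> real) \<Rightarrow> bool" where
  "is_decomposition V w m Vs ws \<longleftrightarrow>
     (\<forall>j\<in>{1..m}. Vs j \<subseteq> V) \<and>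
     (\<forall>u\<in>V. \<forall>v\<in>V. w u v =
        (\<Sum>j\<in>{1..m}. if u \<in> Vs j \<and> v \<in> Vs j then ws j u v else 0))"

definition lam_Du :: "nat \<Rightarrow> (nat \<Rightarrow> 'a set) \<Rightarrow> (nat \<Rightarrow> 'a \<Rightarrow> 'a \<Rightarrow> real) \<Rightarrow> 'a \<Rightarrow> real" where
  "lam_Du m Vs ws u = (\<Sum>j\<in>{j\<in>{1..m}. u \<in> Vs j}. smallest_eig (Vs j) (ws j))"

definition lam_D :: "'a set \<Rightarrow> nat \<Rightarrow> (nat \<Rightarrow> 'a set) \<Rightarrow> (nat \<Rightarrow> 'a \<Rightarrow> 'a \<Rightarrow> real) \<Rightarrow> real" where
  "lam_D V m Vs ws = Min (lam_Du m Vs ws ` V)"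

end

theory Submission
  imports Defs "HOL-Analysis.Analysis"
begin


definition ip :: "'a set \<Rightarrow> ('a \<Rightarrow> real) \<Rightarrow> ('a \<Rightarrow> real) \<Rightarrow> real" where
  "ip V x y = (\<Sum>v\<in>V. x v * y v)"

definition Qf :: "'a set \<Rightarrow> ('a \<Rightarrow> 'a \<Rightarrow> real) \<Rightarrow> ('a \<Rightarrow> real) \<Rightarrow> real" where
  "Qf V w x = (\<Sum>u\<in>V. x u * adj_apply V w x u)"

lemma cross_sym:
  assumes sym: "\<And>u v. w u v = w v u"
  shows "(\<Sum>u\<in>V. x u * adj_apply V w y u) = (\<Sum>u\<in>V. y u * adj_apply V w x u)"
proof -
  have "(\<Sum>u\<in>V. x u * adj_apply V w y u) = (\<Sum>u\<in>V. \<Sum>v\<in>V. x u * w u v * y v)"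
    by (simp add: adj_apply_def sum_distrib_left mult_ac)
  also have "\<dots> = (\<Sum>v\<in>V. \<Sum>u\<in>V. x u * w u v * y v)" by (rule sum.swap)
  also have "\<dots> = (\<Sum>v\<in>V. y v * adj_apply V w x v)"
    by (simp add: adj_apply_def sum_distrib_left mult_ac sym)
  finally show ?thesis .
qed

lemma adj_lin: "adj_apply V w (\<lambda>u. x u + c * y u) u = adj_apply V w x u + c * adj_apply V w y u"
  by (simp add: adj_apply_def algebra_simps sum.distrib sum_distrib_left)

lemma Qf_add:
  assumes sym: "\<And>u v. w u v = w v u"
  shows "Qf V w (\<lambda>u. x u + c * y u) = Qf V w x + 2 * c * (\<Sum>u\<in>V. y u * adj_apply V w x u) + c^2 * Qf V w y"
proof -
  have "Qf V w (\<lambda>u. x u + c * y u) = (\<Sum>u\<in>V. x u * adj_apply V w x u) + c * (\<Sum>u\<in>V. x u * adj_apply V w y u)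
     + c * (\<Sum>u\<in>V. y u * adj_apply V w x u) + c^2 * (\<Sum>u\<in>V. y u * adj_apply V w y u)"
    unfolding Qf_def adj_lin by (simp add: algebra_simps sum.distrib sum_distrib_left power2_eq_square)
  then show ?thesis using cross_sym[where V=V and x=x and y=y, OF sym] by (simp add: Qf_def)
qed

lemma ip_add: "ip V (\<lambda>u. x u + c * y u) (\<lambda>u. x u + c * y u) = ip V x x + 2 * c * ip V y x + c^2 * ip V y y"
  by (simp add: ip_def algebra_simps sum.distrib sum_distrib_left power2_eq_square)

lemma quad_nonneg_zero:
  fixes R P :: real
  assumes "R \<ge> 0" and "\<And>s. s > 0 \<Longrightarrow> - 2 * s * R + s^2 * P \<ge> 0"
  shows "R = 0"
proof (rule ccontr)
  assume "R \<noteq> 0" then have R: "R > 0" using assms by simp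
  define s where "s = R / (\<bar>P\<bar> + 1)"
  have s: "s > 0" using R by (simp add: s_def)
  have "- 2 * s * R + s^2 * P \<ge> 0" using assms(2) s by blast
  then have "s * (s * P - 2 * R) \<ge> 0" by (simp add: algebra_simps power2_eq_square)
  then have "s * P \<ge> 2 * R" using s by (simp add: zero_le_mult_iff)
  moreover have "s * P \<le> s * \<bar>P\<bar>" using s by (simp add: mult_left_mono)
  moreover have "s * \<bar>P\<bar> < R" using R by (simp add: s_def field_simps)
  ultimately show False using R by linarith
qed

lemma variational:
  assumes fin: "finite V" and sym: "\<And>u v. w u v = w v u"
    and psd: "\<And>z. \<mu> * ip V z z \<le> Qf V w z"
    and eq: "Qf V w x = \<mu> * ip V x x"
  shows "\<forall>u\<in>V. adj_apply V w x u = \<mu> * x u"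
proof -
  define r where "r u = adj_apply V w x u - \<mu> * x u" for u
  define R where "R = ip V r r"
  define P where "P = Qf V w r - \<mu> * ip V r r"
  have R0: "R \<ge> 0" unfolding R_def ip_def by (simp add: sum_nonneg)
  have key: "(\<Sum>u\<in>V. r u * adj_apply V w x u) - \<mu> * ip V r x = R"
    unfolding R_def ip_def r_def by (simp add: algebra_simps sum_subtractf sum_distrib_left sum.distrib)
  have "R = 0"
  proof (rule quad_nonneg_zero[OF R0])
    fix s :: real assume "s > 0"
    have "\<mu> * ip V (\<lambda>u. x u + (-s) * r u) (\<lambda>u. x u + (-s) * r u) \<le> Qf V w (\<lambda>u. x u + (-s) * r u)"
      by (rule psd)
    then have h: "\<mu> * (ip V x x + 2 * (-s) * ip V r x + (-s)^2 * ip V r r) \<le>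
       Qf V w x + 2 * (-s) * (\<Sum>u\<in>V. r u * adj_apply V w x u) + (-s)^2 * Qf V w r"
      unfolding Qf_add[OF sym] ip_add .
    have h2: "(\<Sum>u\<in>V. r u * adj_apply V w x u) = R + \<mu> * ip V r x" using key by simp
    from h show "- 2 * s * R + s^2 * P \<ge> 0"
      unfolding h2 eq P_def by (simp add: algebra_simps power2_eq_square)
  qed
  then have "\<forall>u\<in>V. r u * r u = 0"
    using fin unfolding R_def ip_def by (subst (asm) sum_nonneg_eq_0_iff) auto
  then show ?thesis by (simp add: r_def)
qed



lemma Qf_scale: "Qf V w (\<lambda>u. c * x u) = c^2 * Qf V w x"
  by (simp add: Qf_def adj_apply_def sum_distrib_left algebra_simps power2_eq_square)

lemma ip_scale: "ip V (\<lambda>u. c * x u) (\<lambda>u. c * x u) = c^2 * ip V x x"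
  by (simp add: ip_def sum_distrib_left algebra_simps power2_eq_square)

lemma Qf_restrict: "Qf V w (\<lambda>u. if u \<in> V then x u else 0) = Qf V w x"
  unfolding Qf_def adj_apply_def by (intro sum.cong) auto

lemma ip_restrict: "ip V (\<lambda>u. if u \<in> V then x u else 0) (\<lambda>u. if u \<in> V then x u else 0) = ip V x x"
  unfolding ip_def by (intro sum.cong) auto

lemma ip_nonneg: "ip V x x \<ge> 0"
  unfolding ip_def by (simp add: sum_nonneg)

lemma ip_zero: assumes "finite V" "ip V x x = 0" "u \<in> V" shows "x u = 0"
  using assms unfolding ip_def by (subst (asm) sum_nonneg_eq_0_iff) auto

lemma Qf_zero: assumes "\<forall>u\<in>V. x u = 0" shows "Qf V w x = 0"
  using assms unfolding Qf_def by simp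

lemma exists_min:
  fixes V :: "'a set" and w :: "'a \<Rightarrow> 'a \<Rightarrow> real"
  assumes fin: "finite V" and ne: "V \<noteq> {}" and sym: "\<And>u v. w u v = w v u"
  shows "\<exists>x \<mu>. ip V x x = 1 \<and> Qf V w x = \<mu> \<and> (\<forall>z. \<mu> * ip V z z \<le> Qf V w z)"
proof -
  define S where "S = {x :: 'a \<Rightarrow> real. (\<forall>u. (if u\<in>V then 0 else x u) = 0) \<and> ip V x x = 1}"
  define K where "K = PiE UNIV (\<lambda>u. if u\<in>V then {-1..1} else {0::real})"
  have "compactin (product_topology (\<lambda>i. euclidean) UNIV) K"
    unfolding K_def compactin_PiE
    by (auto simp: compactin_euclidean_iff)
  then have cK: "compact K" by (simp add: euclidean_product_topology compactin_euclidean_iff)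
  have cont_ip: "continuous_on UNIV (\<lambda>x :: 'a \<Rightarrow> real. ip V x x)"
    unfolding ip_def by (intro continuous_intros continuous_on_product_coordinates)
  have "closed S"
    unfolding S_def
  proof (intro closed_Collect_conj closed_Collect_all)
    fix u
    show "closed {x :: 'a \<Rightarrow> real. (if u \<in> V then 0 else x u) = 0}"
      by (cases "u \<in> V") (auto intro!: closed_Collect_eq continuous_on_product_coordinates continuous_intros)
    show "closed {x :: 'a \<Rightarrow> real. ip V x x = 1}"
      by (intro closed_Collect_eq cont_ip continuous_intros)
  qed
  have SK: "S \<subseteq> K"
  proof
    fix x assume xS: "x \<in> S"
    have "x u \<in> (if u\<in>V then {-1..1} else {0})" for u
    proof (cases "u \<in> V")
      case True
      have "x u * x u \<le> ip V x x" unfolding ip_def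
        using fin True by (intro member_le_sum) auto
      then have "x u ^2 \<le> 1" using xS by (simp add: S_def power2_eq_square)
      then have "\<bar>x u\<bar> \<le> 1" by (simp add: abs_square_le_1)
      then show ?thesis using True by auto
    next
      case False then show ?thesis using xS by (auto simp: S_def) (metis False)
    qed
    then show "x \<in> K" unfolding K_def by auto
  qed
  have cS: "compact S"
    using compact_Int_closed[OF cK \<open>closed S\<close>] SK by (simp add: Int_absorb1)
  obtain u0 where u0: "u0 \<in> V" using ne by auto
  have "(\<lambda>u. if u = u0 then 1 else 0 :: real) \<in> S"
    unfolding S_def ip_def using fin u0 by (auto simp: if_distrib cong: if_cong)
  then have Sne: "S \<noteq> {}" by auto
  have cQ: "continuous_on S (Qf V w)"
    unfolding Qf_def adj_apply_def
    by (intro continuous_intros continuous_on_subset[OF continuous_on_product_coordinates]) auto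
  obtain x0 where x0: "x0 \<in> S" and min: "\<And>y. y \<in> S \<Longrightarrow> Qf V w x0 \<le> Qf V w y"
    using continuous_attains_inf[OF cS Sne cQ] by blast
  define \<mu> where "\<mu> = Qf V w x0"
  have "\<mu> * ip V z z \<le> Qf V w z" for z
  proof (cases "ip V z z = 0")
    case True
    then have "\<forall>u\<in>V. z u = 0" using ip_zero[OF fin] by blast
    then show ?thesis using True Qf_zero[of V z w] by simp
  next
    case False
    then have p: "ip V z z > 0" using ip_nonneg[of V z] by linarith
    define c where "c = 1 / sqrt (ip V z z)"
    define z' where "z' = (\<lambda>u. c * (if u \<in> V then z u else 0))"
    have c2: "c^2 = 1 / ip V z z" using p by (simp add: c_def power_divide)
    have "ip V z' z' = 1" unfolding z'_def ip_scale ip_restrict c2 using p by simp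
    then have "z' \<in> S" unfolding S_def z'_def by auto
    then have "\<mu> \<le> Qf V w z'" using min \<mu>_def by auto
    also have "\<dots> = Qf V w z / ip V z z" unfolding z'_def Qf_scale Qf_restrict c2 by simp
    finally show ?thesis using p by (simp add: field_simps)
  qed
  moreover have "ip V x0 x0 = 1" using x0 by (simp add: S_def)
  ultimately show ?thesis unfolding \<mu>_def by blast
qed



lemma ip_sym: "ip V x y = ip V y x" unfolding ip_def by (simp add: mult.commute)

lemma eig_Qf: assumes "\<forall>u\<in>V. adj_apply V w x u = \<nu> * x u"
  shows "Qf V w x = \<nu> * ip V x x"
  using assms unfolding Qf_def ip_def by (simp add: sum_distrib_left mult_ac)

lemma eig_normalize:
  assumes fin: "finite V" and "is_eigenvector V w \<nu> y"
  shows "\<exists>e. ip V e e = 1 \<and> (\<forall>u\<in>V. adj_apply V w e u = \<nu> * e u)"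
proof -
  from assms(2) obtain u0 where u0: "u0 \<in> V" "y u0 \<noteq> 0" and ev: "\<forall>u\<in>V. adj_apply V w y u = \<nu> * y u"
    unfolding is_eigenvector_def by blast
  have "ip V y y \<noteq> 0" using ip_zero[OF fin _ u0(1)] u0(2) by blast
  then have p: "ip V y y > 0" using ip_nonneg[of V y] by linarith
  define c where "c = 1 / sqrt (ip V y y)"
  have c2: "c^2 = 1 / ip V y y" using p by (simp add: c_def power_divide)
  have "ip V (\<lambda>u. c * y u) (\<lambda>u. c * y u) = 1" unfolding ip_scale c2 using p by simp
  moreover have "adj_apply V w (\<lambda>u. c * y u) u = c * adj_apply V w y u" for u
    by (simp add: adj_apply_def sum_distrib_left mult_ac)
  ultimately show ?thesis using ev by (intro exI[of _ "\<lambda>u. c * y u"]) (auto simp: mult_ac)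
qed

lemma eig_finite:
  assumes fin: "finite V" and sym: "\<And>u v. w u v = w v u"
  shows "finite (eigenvalues V w)"
proof -
  have "card G \<le> card V" if G: "G \<subseteq> eigenvalues V w" "finite G" for G
  proof -
    have "\<forall>\<nu>\<in>G. \<exists>e. ip V e e = 1 \<and> (\<forall>u\<in>V. adj_apply V w e u = \<nu> * e u)"
      using G eig_normalize[OF fin] unfolding eigenvalues_def by blast
    then obtain e where e: "\<And>\<nu>. \<nu> \<in> G \<Longrightarrow> ip V (e \<nu>) (e \<nu>) = 1"
      and ev: "\<And>\<nu>. \<nu> \<in> G \<Longrightarrow> \<forall>u\<in>V. adj_apply V w (e \<nu>) u = \<nu> * e \<nu> u"
      by metis
    have orth: "ip V (e a) (e b) = (if a = b then 1 else 0)" if "a \<in> G" "b \<in> G" for a b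
    proof (cases "a = b")
      case True then show ?thesis using e that by simp
    next
      case False
      have "(\<Sum>u\<in>V. e a u * adj_apply V w (e b) u) = (\<Sum>u\<in>V. e b u * adj_apply V w (e a) u)"
        by (rule cross_sym[OF sym])
      then have "b * ip V (e a) (e b) = a * ip V (e b) (e a)"
        using ev[OF that(1)] ev[OF that(2)] unfolding ip_def
        by (simp add: sum_distrib_left mult_ac)
      then have "(b - a) * ip V (e a) (e b) = 0" using ip_sym[of V "e a" "e b"] by (simp add: algebra_simps)
      then show ?thesis using False by simp
    qed
    have bessel: "(\<Sum>\<nu>\<in>G. (e \<nu> u)^2) \<le> 1" if u: "u \<in> V" for u
    proof -
      define c where "c \<nu> = e \<nu> u" for \<nu>
      define z where "z v = (\<Sum>\<nu>\<in>G. c \<nu> * e \<nu> v)" for v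
      define d where "d v = (if v = u then 1 else (0::real))" for v
      define S where "S = (\<Sum>\<nu>\<in>G. (c \<nu>)^2)"
      have "ip V z z = (\<Sum>v\<in>V. \<Sum>\<nu>\<in>G. \<Sum>\<nu>'\<in>G. c \<nu> * c \<nu>' * (e \<nu> v * e \<nu>' v))"
        unfolding ip_def z_def by (simp add: sum_product mult_ac)
      also have "\<dots> = (\<Sum>\<nu>\<in>G. \<Sum>\<nu>'\<in>G. \<Sum>v\<in>V. c \<nu> * c \<nu>' * (e \<nu> v * e \<nu>' v))"
        by (rule trans[OF sum.swap], rule sum.cong[OF refl], rule sum.swap)
      also have "\<dots> = (\<Sum>\<nu>\<in>G. \<Sum>\<nu>'\<in>G. c \<nu> * c \<nu>' * ip V (e \<nu>) (e \<nu>'))"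
        by (simp add: ip_def sum_distrib_left)
      also have "\<dots> = (\<Sum>\<nu>\<in>G. \<Sum>\<nu>'\<in>G. if \<nu> = \<nu>' then (c \<nu>)^2 else 0)"
        by (intro sum.cong refl) (auto simp: orth power2_eq_square)
      also have "\<dots> = S" using G(2) by (simp add: S_def)
      finally have zz: "ip V z z = S" .
      have dz: "ip V z d = S"
        unfolding ip_def d_def z_def S_def c_def using fin u by (simp add: if_distrib power2_eq_square cong: if_cong)
      have dd: "ip V d d = 1"
        unfolding ip_def d_def using fin u by (simp add: if_distrib cong: if_cong)
      have "0 \<le> ip V (\<lambda>v. d v + (-1) * z v) (\<lambda>v. d v + (-1) * z v)" by (rule ip_nonneg)
      also have "\<dots> = 1 - S" unfolding ip_add dd zz dz by simp
      finally show ?thesis by (simp add: S_def c_def)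
    qed
    have "card G = (\<Sum>\<nu>\<in>G. ip V (e \<nu>) (e \<nu>))" using e by simp
    also have "\<dots> = (\<Sum>u\<in>V. \<Sum>\<nu>\<in>G. (e \<nu> u)^2)"
      unfolding ip_def power2_eq_square by (rule sum.swap)
    also have "\<dots> \<le> (\<Sum>u\<in>V. 1)" by (intro sum_mono bessel)
    finally show ?thesis by simp
  qed
  then show ?thesis using finite_if_finite_subsets_card_bdd by blast
qed

lemma spectral:
  fixes V :: "'a set" and w :: "'a \<Rightarrow> 'a \<Rightarrow> real"
  assumes fin: "finite V" and ne: "V \<noteq> {}" and sym: "\<And>u v. w u v = w v u"
  shows "smallest_eig V w \<in> eigenvalues V w \<and> (\<forall>z. smallest_eig V w * ip V z z \<le> Qf V w z)"
proof -
  from exists_min[of V w, OF fin ne sym] obtain x \<mu> where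
    H: "ip V x x = 1 \<and> Qf V w x = \<mu> \<and> (\<forall>z. \<mu> * ip V z z \<le> Qf V w z)"
    by (elim exE)
  have x1: "ip V x x = 1" and xq: "Qf V w x = \<mu>" and psd: "\<forall>z. \<mu> * ip V z z \<le> Qf V w z"
    using H by simp_all
  have ev: "\<forall>u\<in>V. adj_apply V w x u = \<mu> * x u"
  proof (rule variational[where V=V and w=w, OF fin sym])
    fix z show "\<mu> * ip V z z \<le> Qf V w z" using psd by blast
  next
    show "Qf V w x = \<mu> * ip V x x" using x1 xq by simp
  qed
  have nz: "\<exists>u\<in>V. x u \<noteq> 0"
  proof (rule ccontr)
    assume "\<not> (\<exists>u\<in>V. x u \<noteq> 0)"
    then have "ip V x x = 0" unfolding ip_def by simp
    with x1 show False by simp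
  qed
  have mem: "\<mu> \<in> eigenvalues V w" unfolding eigenvalues_def is_eigenvector_def
    using ev nz by blast
  have low: "\<mu> \<le> \<nu>" if nu: "\<nu> \<in> eigenvalues V w" for \<nu>
  proof -
    obtain e where e1: "ip V e e = 1" and ev: "\<forall>u\<in>V. adj_apply V w e u = \<nu> * e u"
      using nu eig_normalize[OF fin] unfolding eigenvalues_def by blast
    have "\<mu> * ip V e e \<le> Qf V w e" using psd by blast
    then show ?thesis using eig_Qf[OF ev] e1 by simp
  qed
  have "Min (eigenvalues V w) = \<mu>"
  proof (rule Min_eqI[OF eig_finite[of V w, OF fin sym]])
    fix y assume "y \<in> eigenvalues V w" then show "\<mu> \<le> y" by (rule low)
  next
    show "\<mu> \<in> eigenvalues V w" by (rule mem)
  qed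
  then have "smallest_eig V w = \<mu>" unfolding smallest_eig_def .
  then show ?thesis using mem psd by simp
qed



lemma sum_restrict2:
  assumes "finite V" "A \<subseteq> V"
  shows "(\<Sum>u\<in>V. \<Sum>v\<in>V. if u \<in> A \<and> v \<in> A then f u v else 0) = (\<Sum>u\<in>A. \<Sum>v\<in>A. f u v :: real)"
proof -
  have fA: "finite A" using assms finite_subset by blast
  have "(\<Sum>v\<in>V. if u \<in> A \<and> v \<in> A then f u v else 0) = (if u \<in> A then (\<Sum>v\<in>A. f u v) else 0)" for u
    using sum.inter_restrict[OF assms(1), of "f u" A, symmetric] assms(2)
    by (auto simp: Int_absorb1 Int_absorb2)
  then have "(\<Sum>u\<in>V. \<Sum>v\<in>V. if u \<in> A \<and> v \<in> A then f u v else 0) = (\<Sum>u\<in>V. if u \<in> A then (\<Sum>v\<in>A. f u v) else 0)"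
    by simp
  also have "\<dots> = (\<Sum>u\<in>V \<inter> A. \<Sum>v\<in>A. f u v)" using sum.inter_restrict[OF assms(1)] by metis
  also have "V \<inter> A = A" using assms(2) by blast
  finally show ?thesis .
qed

lemma Qf_decomp:
  assumes fin: "finite V" and dec: "is_decomposition V w m Vs ws"
  shows "Qf V w x = (\<Sum>j\<in>{1..m}. Qf (Vs j) (ws j) x)"
proof -
  have sub: "\<And>j. j \<in> {1..m} \<Longrightarrow> Vs j \<subseteq> V" and wd: "\<And>u v. u \<in> V \<Longrightarrow> v \<in> V \<Longrightarrow> w u v =
        (\<Sum>j\<in>{1..m}. if u \<in> Vs j \<and> v \<in> Vs j then ws j u v else 0)"
    using dec unfolding is_decomposition_def by auto
  have "Qf V w x = (\<Sum>u\<in>V. \<Sum>v\<in>V. x u * w u v * x v)"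
    unfolding Qf_def adj_apply_def by (simp add: sum_distrib_left mult_ac)
  also have "\<dots> = (\<Sum>u\<in>V. \<Sum>v\<in>V. \<Sum>j\<in>{1..m}. if u \<in> Vs j \<and> v \<in> Vs j then x u * ws j u v * x v else 0)"
    by (auto simp: wd sum_distrib_left sum_distrib_right intro!: sum.cong)
  also have "\<dots> = (\<Sum>u\<in>V. \<Sum>j\<in>{1..m}. \<Sum>v\<in>V. if u \<in> Vs j \<and> v \<in> Vs j then x u * ws j u v * x v else 0)"
    by (intro sum.cong refl sum.swap)
  also have "\<dots> = (\<Sum>j\<in>{1..m}. \<Sum>u\<in>V. \<Sum>v\<in>V. if u \<in> Vs j \<and> v \<in> Vs j then x u * ws j u v * x v else 0)"
    by (rule sum.swap)
  also have "\<dots> = (\<Sum>j\<in>{1..m}. \<Sum>u\<in>Vs j. \<Sum>v\<in>Vs j. x u * ws j u v * x v)"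
    by (intro sum.cong refl sum_restrict2 fin sub) 
  also have "\<dots> = (\<Sum>j\<in>{1..m}. Qf (Vs j) (ws j) x)"
    unfolding Qf_def adj_apply_def by (simp add: sum_distrib_left mult_ac)
  finally show ?thesis .
qed

lemma ip_decomp:
  assumes fin: "finite V" and dec: "is_decomposition V w m Vs ws"
  shows "(\<Sum>u\<in>V. lam_Du m Vs ws u * (x u)^2) =
    (\<Sum>j\<in>{1..m}. smallest_eig (Vs j) (ws j) * ip (Vs j) x x)"
proof -
  have sub: "\<And>j. j \<in> {1..m} \<Longrightarrow> Vs j \<subseteq> V"
    using dec unfolding is_decomposition_def by auto
  have "(\<Sum>u\<in>V. lam_Du m Vs ws u * (x u)^2) =
     (\<Sum>u\<in>V. \<Sum>j\<in>{1..m}. if u \<in> Vs j then smallest_eig (Vs j) (ws j) * (x u)^2 else 0)"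
    unfolding lam_Du_def by (intro sum.cong refl) (simp only: sum_distrib_right sum.inter_filter[OF finite_atLeastAtMost], auto intro!: sum.cong)
  also have "\<dots> = (\<Sum>j\<in>{1..m}. \<Sum>u\<in>V. if u \<in> Vs j then smallest_eig (Vs j) (ws j) * (x u)^2 else 0)"
    by (rule sum.swap)
  also have "\<dots> = (\<Sum>j\<in>{1..m}. \<Sum>u\<in>V \<inter> Vs j. smallest_eig (Vs j) (ws j) * (x u)^2)"
    by (rule sum.cong[OF refl], rule sum.inter_restrict[OF fin, symmetric])
  also have "\<dots> = (\<Sum>j\<in>{1..m}. smallest_eig (Vs j) (ws j) * ip (Vs j) x x)"
  proof (intro sum.cong refl)
    fix j assume "j \<in> {1..m}"
    then have "V \<inter> Vs j = Vs j" using sub by blast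
    then show "(\<Sum>u\<in>V \<inter> Vs j. smallest_eig (Vs j) (ws j) * (x u)^2) = smallest_eig (Vs j) (ws j) * ip (Vs j) x x"
      by (simp add: ip_def sum_distrib_left power2_eq_square)
  qed
  finally show ?thesis .
qed



theorem mainTheorem1:
  fixes V :: "'a set" and w :: "'a \<Rightarrow> 'a \<Rightarrow> real"
    and m :: nat and Vs :: "nat \<Rightarrow> 'a set" and ws :: "nat \<Rightarrow> 'a \<Rightarrow> 'a \<Rightarrow> real"
  assumes "finite V" and "V \<noteq> {}"
    and "\<And>u v. w u v = w v u"
    and "\<And>j u v. j \<in> {1..m} \<Longrightarrow> ws j u v = ws j v u"
    and "is_decomposition V w m Vs ws"
  shows "smallest_eig V w \<ge> lam_D V m Vs ws \<and>
    (smallest_eig V w = lam_D V m Vs ws \<longleftrightarrow>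
      (\<exists>x :: 'a \<Rightarrow> real. (\<exists>u\<in>V. x u \<noteq> 0) \<and>
         (\<forall>u\<in>V. lam_Du m Vs ws u > lam_D V m Vs ws \<longrightarrow> x u = 0) \<and>
         (\<forall>j\<in>{1..m}. (\<forall>u\<in>Vs j. x u = 0) \<or>
            is_eigenvector (Vs j) (ws j) (smallest_eig (Vs j) (ws j)) x)))"
proof -
  note fin = assms(1) and ne = assms(2) and sym = assms(3) and symj = assms(4) and dec = assms(5)
  define L where "L = lam_Du m Vs ws"
  define lD where "lD = lam_D V m Vs ws"
  define lam where "lam j = smallest_eig (Vs j) (ws j)" for j
  define lH where "lH = smallest_eig V w"
  have sub: "\<And>j. j \<in> {1..m} \<Longrightarrow> Vs j \<subseteq> V"
    using dec unfolding is_decomposition_def by auto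
  have finj: "\<And>j. j \<in> {1..m} \<Longrightarrow> finite (Vs j)" using sub fin finite_subset by blast
  have lD_le: "\<And>u. u \<in> V \<Longrightarrow> lD \<le> L u"
    unfolding lD_def L_def lam_D_def using fin by (intro Min_le) auto
  have boundj: "lam j * ip (Vs j) x x \<le> Qf (Vs j) (ws j) x" if j: "j \<in> {1..m}" for j x
  proof (cases "Vs j = {}")
    case True then show ?thesis by (simp add: ip_def Qf_def)
  next
    case False
    have "\<And>u v. ws j u v = ws j v u" using symj[OF j] .
    from spectral[of "Vs j" "ws j", OF finj[OF j] False this] show ?thesis unfolding lam_def by blast
  qed
  have gap: "Qf V w x - lD * ip V x x =
      (\<Sum>j\<in>{1..m}. Qf (Vs j) (ws j) x - lam j * ip (Vs j) x x) + (\<Sum>u\<in>V. (L u - lD) * (x u)^2)" for x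
  proof -
    have "(\<Sum>u\<in>V. (L u - lD) * (x u)^2) = (\<Sum>u\<in>V. L u * (x u)^2) - lD * ip V x x"
      by (simp add: ip_def algebra_simps sum_subtractf sum_distrib_left power2_eq_square)
    also have "(\<Sum>u\<in>V. L u * (x u)^2) = (\<Sum>j\<in>{1..m}. lam j * ip (Vs j) x x)"
      unfolding L_def lam_def by (rule ip_decomp[OF fin dec])
    finally show ?thesis using Qf_decomp[OF fin dec, of x] by (simp add: sum_subtractf)
  qed
  have G1: "(\<Sum>j\<in>{1..m}. Qf (Vs j) (ws j) x - lam j * ip (Vs j) x x) \<ge> 0" for x
    using boundj by (intro sum_nonneg) auto
  have G2: "(\<Sum>u\<in>V. (L u - lD) * (x u)^2) \<ge> 0" for x
    using lD_le by (intro sum_nonneg) auto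
  have lower: "lD * ip V x x \<le> Qf V w x" for x using gap[of x] G1[of x] G2[of x] by linarith
  obtain Hspec: "lH \<in> eigenvalues V w" and Hpsd: "\<And>z. lH * ip V z z \<le> Qf V w z"
    using spectral[of V w, OF fin ne sym] unfolding lH_def by blast
  obtain y where ynz: "\<exists>u\<in>V. y u \<noteq> 0" and yev: "\<forall>u\<in>V. adj_apply V w y u = lH * y u"
    using Hspec unfolding eigenvalues_def is_eigenvector_def by blast
  have pos: "ip V x x > 0" if "\<exists>u\<in>V. x u \<noteq> 0" for x
  proof -
    have "ip V x x \<noteq> 0" using that ip_zero[OF fin] by blast
    then show ?thesis using ip_nonneg[of V x] by linarith
  qed
  have yQ: "Qf V w y = lH * ip V y y" by (rule eig_Qf[OF yev])
  have part1: "lD \<le> lH"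
    using lower[of y] yQ pos[OF ynz] by (simp add: mult_le_cancel_right)
  have fwd: "\<exists>x :: 'a \<Rightarrow> real. (\<exists>u\<in>V. x u \<noteq> 0) \<and>
         (\<forall>u\<in>V. L u > lD \<longrightarrow> x u = 0) \<and>
         (\<forall>j\<in>{1..m}. (\<forall>u\<in>Vs j. x u = 0) \<or> is_eigenvector (Vs j) (ws j) (lam j) x)"
    if eq: "lH = lD"
  proof (intro exI[of _ y] conjI ynz ballI impI)
    have sumz: "(\<Sum>j\<in>{1..m}. Qf (Vs j) (ws j) y - lam j * ip (Vs j) y y) + (\<Sum>u\<in>V. (L u - lD) * (y u)^2) = 0"
      using gap[of y] yQ eq by simp
    then have s1: "(\<Sum>j\<in>{1..m}. Qf (Vs j) (ws j) y - lam j * ip (Vs j) y y) = 0"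
      and s2: "(\<Sum>u\<in>V. (L u - lD) * (y u)^2) = 0"
      using G1[of y] G2[of y] by linarith+
    fix u assume u: "u \<in> V" and gt: "L u > lD"
    have "(L u - lD) * (y u)^2 = 0"
      using s2 fin u lD_le by (subst (asm) sum_nonneg_eq_0_iff) auto
    then show "y u = 0" using gt by simp
  next
    have sumz: "(\<Sum>j\<in>{1..m}. Qf (Vs j) (ws j) y - lam j * ip (Vs j) y y) + (\<Sum>u\<in>V. (L u - lD) * (y u)^2) = 0"
      using gap[of y] yQ eq by simp
    then have s1: "(\<Sum>j\<in>{1..m}. Qf (Vs j) (ws j) y - lam j * ip (Vs j) y y) = 0"
      using G1[of y] G2[of y] by linarith
    fix j assume j: "j \<in> {1..m}"
    have ej: "Qf (Vs j) (ws j) y - lam j * ip (Vs j) y y = 0"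
      using s1 j boundj by (subst (asm) sum_nonneg_eq_0_iff) auto
    show "(\<forall>u\<in>Vs j. y u = 0) \<or> is_eigenvector (Vs j) (ws j) (lam j) y"
    proof (cases "\<forall>u\<in>Vs j. y u = 0")
      case True then show ?thesis by blast
    next
      case False
      then have nej: "Vs j \<noteq> {}" by blast
      have sj: "\<And>u v. ws j u v = ws j v u" using symj[OF j] .
      have "\<forall>u\<in>Vs j. adj_apply (Vs j) (ws j) y u = lam j * y u"
      proof (rule variational[where V="Vs j" and w="ws j", OF finj[OF j] sj])
        fix z show "lam j * ip (Vs j) z z \<le> Qf (Vs j) (ws j) z" by (rule boundj[OF j])
      next
        show "Qf (Vs j) (ws j) y = lam j * ip (Vs j) y y" using ej by simp
      qed
      then show ?thesis using False unfolding is_eigenvector_def by blast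
    qed
  qed
  have bwd: "lH = lD" if ex: "\<exists>x :: 'a \<Rightarrow> real. (\<exists>u\<in>V. x u \<noteq> 0) \<and>
         (\<forall>u\<in>V. L u > lD \<longrightarrow> x u = 0) \<and>
         (\<forall>j\<in>{1..m}. (\<forall>u\<in>Vs j. x u = 0) \<or> is_eigenvector (Vs j) (ws j) (lam j) x)"
  proof -
    obtain x where xnz: "\<exists>u\<in>V. x u \<noteq> 0" and c1: "\<forall>u\<in>V. L u > lD \<longrightarrow> x u = 0"
      and c2: "\<forall>j\<in>{1..m}. (\<forall>u\<in>Vs j. x u = 0) \<or> is_eigenvector (Vs j) (ws j) (lam j) x"
      using ex by blast
    have "Qf (Vs j) (ws j) x - lam j * ip (Vs j) x x = 0" if j: "j \<in> {1..m}" for j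
    proof (cases "\<forall>u\<in>Vs j. x u = 0")
      case True then show ?thesis using Qf_zero[of "Vs j" x "ws j"] by (simp add: ip_def)
    next
      case False
      then have "is_eigenvector (Vs j) (ws j) (lam j) x" using c2 j by blast
      then show ?thesis using eig_Qf unfolding is_eigenvector_def by auto
    qed
    then have t1: "(\<Sum>j\<in>{1..m}. Qf (Vs j) (ws j) x - lam j * ip (Vs j) x x) = 0" by simp
    have "(L u - lD) * (x u)^2 = 0" if u: "u \<in> V" for u
      using c1 lD_le[OF u] u by (cases "L u > lD") auto
    then have t2: "(\<Sum>u\<in>V. (L u - lD) * (x u)^2) = 0" by (intro sum.neutral) blast
    have "Qf V w x = lD * ip V x x" using gap[of x] t1 t2 by simp
    then have "lH * ip V x x \<le> lD * ip V x x" using Hpsd[of x] by simp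
    then have "lH \<le> lD" using pos[OF xnz] by (simp add: mult_le_cancel_right)
    then show ?thesis using part1 by simp
  qed
  show ?thesis
    unfolding lH_def[symmetric] lD_def[symmetric] L_def[symmetric] lam_def[symmetric]
    using part1 fwd bwd by blast
qed


end
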